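(* Let $n\ge 3$ and let $X_n$ be the doubled regular $n$-gon. Let $\gamma\colon S^1\to X_n$ be an over-under curve between adjacent edges on $X_n$. Then: (1) if $n$ is even, $\gamma$ is a $1/n$-geodesic; (2) if $n$ is odd, $\gamma$ is a $1/2n$-geodesic.
   Context: The doubled regular $n$-gon $X_n$ is the metric space obtained by gluing two congruent regular $n$-gons (a "top face" and a "bottom face") along their common boundary edges. The distance between two points on the same face is the Euclidean distance; the distance between points $x,y$ on opposite faces is $\min_z\{d(x,z)+d(z,y)\}$, where $d$ is the Euclidean distance on each face and $z$ ranges over the boundary (edge) points. A geodesic is a locally length-minimizing curve; a closed geodesic is a map $\gamma\colon S^1\to X_n$ that is locally length minimizing at every $t\in S^1$. Geodesics are straight segments within each face and, when crossing an edge from one face to the other, reflect like billiard paths (angle of incidence equals angle of reflection). An over-under curve between adjacent edges is the closed geodesic (parametrized with constant speed and traversed once until it closes up smoothly) that passes through the midpoints of adjacent edges: its segments join the midpoints of consecutive adjacent edges, alternately on the top and bottom faces. (For $n$ even it closes smoothly after $n$ segments; for $n$ odd it needs $2n$ segments.) For $k\in\mathbb{N}$, a $1/k$-geodesic is a constant speed closed geodesic $\gamma\colon S^1\to X_n$ of length $L$ that minimizes on all subintervals of length $L/k$, i.e. for every subinterval of $S^1$ on which $\gamma$ has length $L/k$, the length of $\gamma$ restricted to it equals the distance in $X_n$ between its endpoints. *)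

theory Defs
  imports "HOL-Analysis.Analysis"
begin

text \<open>Vertices of the regular n-gon inscribed in the unit circle (indices are integers,
  taken mod n automatically by periodicity of cis).\<close>
definition vertex :: "nat \<Rightarrow> int \<Rightarrow> complex" where
  "vertex n k = cis (2 * pi * real_of_int k / real n)"

definition polygon :: "nat \<Rightarrow> complex set" where
  "polygon n = convex hull {vertex n (int k) | k. k < n}"

text \<open>A point of X_n is a pair (face, position); True = top face, False = bottom face.
  Points on the boundary of the two faces are identified (their distance is 0).\<close>
definition XN :: "nat \<Rightarrow> (bool \<times> complex) set" where
  "XN n = {(b, p). p \<in> polygon n}"

definition dX :: "nat \<Rightarrow> bool \<times> complex \<Rightarrow> bool \<times> complex \<Rightarrow> real" where
  "dX n x y = (if fst x = fst y then dist (snd x) (snd y)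
               else Inf {dist (snd x) z + dist z (snd y) | z. z \<in> frontier (polygon n)})"

section \<open>Lengths and geodesics (curves on S^1 = R/Z, i.e. 1-periodic maps R \<to> X_n)\<close>

definition curve_length :: "nat \<Rightarrow> (real \<Rightarrow> bool \<times> complex) \<Rightarrow> real \<Rightarrow> real \<Rightarrow> real" where
  "curve_length n \<gamma> a b = Sup {(\<Sum>i<m. dX n (\<gamma> (t i)) (\<gamma> (t (Suc i)))) | t m.
       t 0 = a \<and> t m = b \<and> (\<forall>i<m. t i \<le> t (Suc i))}"

definition closed_curve :: "nat \<Rightarrow> (real \<Rightarrow> bool \<times> complex) \<Rightarrow> bool" where
  "closed_curve n \<gamma> \<longleftrightarrow> (\<forall>t. \<gamma> t \<in> XN n) \<and> (\<forall>t. \<gamma> (t + 1) = \<gamma> t)"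

definition total_length :: "nat \<Rightarrow> (real \<Rightarrow> bool \<times> complex) \<Rightarrow> real" where
  "total_length n \<gamma> = curve_length n \<gamma> 0 1"

definition constant_speed :: "nat \<Rightarrow> (real \<Rightarrow> bool \<times> complex) \<Rightarrow> bool" where
  "constant_speed n \<gamma> \<longleftrightarrow>
     (\<forall>a b. a \<le> b \<longrightarrow> curve_length n \<gamma> a b = (b - a) * total_length n \<gamma>)"

definition locally_minimizing_at :: "nat \<Rightarrow> (real \<Rightarrow> bool \<times> complex) \<Rightarrow> real \<Rightarrow> bool" where
  "locally_minimizing_at n \<gamma> t \<longleftrightarrow> (\<exists>\<epsilon>>0. \<forall>a b. t - \<epsilon> \<le> a \<longrightarrow> a \<le> b \<longrightarrow> b \<le> t + \<epsilon> \<longrightarrow>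
       curve_length n \<gamma> a b = dX n (\<gamma> a) (\<gamma> b))"

definition closed_geodesic :: "nat \<Rightarrow> (real \<Rightarrow> bool \<times> complex) \<Rightarrow> bool" where
  "closed_geodesic n \<gamma> \<longleftrightarrow> closed_curve n \<gamma> \<and> (\<forall>t. locally_minimizing_at n \<gamma> t)"

text \<open>1/k-geodesic: constant speed closed geodesic of length L > 0 minimizing on every
  parameter subinterval of length 1/k (equivalently, of curve length L/k).\<close>
definition one_over_k_geodesic :: "nat \<Rightarrow> (real \<Rightarrow> bool \<times> complex) \<Rightarrow> nat \<Rightarrow> bool" where
  "one_over_k_geodesic n \<gamma> k \<longleftrightarrow> closed_geodesic n \<gamma> \<and> constant_speed n \<gamma> \<and>
     0 < total_length n \<gamma> \<and>
     (\<forall>a. curve_length n \<gamma> a (a + 1 / real k) = dX n (\<gamma> a) (\<gamma> (a + 1 / real k)))"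

definition edge_mid :: "nat \<Rightarrow> int \<Rightarrow> complex" where
  "edge_mid n e = (vertex n e + vertex n (e + 1)) / 2"

text \<open>Unit-parameter-per-segment version: segment number k (k = floor s) joins the midpoint
  of edge j + sigma*k to that of edge j + sigma*(k+1), on face b XOR (k odd).
  sigma = 1 or -1 gives the orientation, b the starting face.\<close>
definition over_under_base :: "nat \<Rightarrow> int \<Rightarrow> int \<Rightarrow> bool \<Rightarrow> real \<Rightarrow> bool \<times> complex" where
  "over_under_base n j \<sigma> b s =
     (let k = \<lfloor>s\<rfloor>; u = s - real_of_int k;
          p = edge_mid n (j + \<sigma> * k); q = edge_mid n (j + \<sigma> * (k + 1))
      in (b \<noteq> odd k, p + complex_of_real u * (q - p)))"

text \<open>Number of segments until the curve closes up smoothly.\<close>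
definition num_segments :: "nat \<Rightarrow> nat" where
  "num_segments n = (if even n then n else 2 * n)"

text \<open>Over-under curve parametrized on S^1 = R/Z with constant speed, traversed once,
  with arbitrary starting edge j, orientation sigma, starting face b and phase c.\<close>
definition over_under :: "nat \<Rightarrow> int \<Rightarrow> int \<Rightarrow> bool \<Rightarrow> real \<Rightarrow> real \<Rightarrow> bool \<times> complex" where
  "over_under n j \<sigma> b c t = over_under_base n j \<sigma> b (real (num_segments n) * t + c)"

end

theory Submission
  imports Defs
begin


lemma poly_key:
  fixes sa ca sb cb x y :: real
  assumes "sa^2 + ca^2 = 1" "sb^2 + cb^2 = 1" "0 \<le> x" "0 \<le> y" "x + y \<le> 1"
  shows "x * y * sa^4 \<le> (x * (sb * ca - cb * sa)^2 + (1-x) * sb^2) * ((1-y) * sb^2 + y * (sb * ca + cb * sa)^2)"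
proof -
  define G where "G = (\<lambda>y. (x * (sb * ca - cb * sa)^2 + (1-x) * sb^2) * ((1-y) * sb^2 + y * (sb * ca + cb * sa)^2) - x * y * sa^4)"
  have lin: "G y * (1 - x) = (1 - x - y) * G 0 + y * G (1 - x)"
    unfolding G_def by (simp add: algebra_simps)
  have g0: "G 0 \<ge> 0" unfolding G_def using assms by (simp add: mult_nonneg_nonneg)
  have c2: "cb^2 = 1 - sb^2" "ca^2 = 1 - sa^2" using assms by auto
  have g1: "G (1 - x) = sb^2 * (sb * ca - (2*x-1) * cb * sa)^2"
  proof -
    have "G (1 - x) - sb^2 * (sb * ca - (2*x-1) * cb * sa)^2 = 0"
      unfolding G_def
      using assms(1,2) by algebra
    then show ?thesis by simp
  qed
  have "G y \<ge> 0"
  proof (cases "x < 1")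
    case True
    have "G y * (1 - x) \<ge> 0" unfolding lin using g0 g1 assms by (simp add: mult_nonneg_nonneg)
    then show ?thesis using True by (simp add: zero_le_mult_iff)
  next
    case False
    then have "y = 0" using assms by simp
    then show ?thesis using g0 by simp
  qed
  then show ?thesis unfolding G_def by simp
qed


lemma cis_add_int: "cis (x + 2*pi * of_int m) = cis x"
proof -
  have "cis (x + 2*pi * of_int m) = cis x * cis (2*pi * of_int m)" by (simp only: cis_mult)
  also have "cis (2*pi * of_int m) = 1" by (rule cis_multiple_2pi) simp
  finally show ?thesis by simp
qed

lemma cos_add_int: "cos (x + 2*pi * of_int m) = cos x"
  by (metis cis.sel(1) cis_add_int)

lemma vertex_mod: assumes "n > 0" shows "vertex n k = vertex n (k mod int n)"
proof -
  have k: "k = int n * (k div int n) + k mod int n" by simp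
  have "2 * pi * real_of_int k / real n = 2 * pi * real_of_int (k mod int n) / real n + 2*pi * of_int (k div int n)"
  proof -
    have "real_of_int k = real n * of_int (k div int n) + of_int (k mod int n)"
      by (metis of_int_add of_int_mult of_int_of_nat_eq k)
    then show ?thesis using assms by (simp add: field_simps)
  qed
  then show ?thesis unfolding vertex_def by (simp add: cis_add_int)
qed

lemma vertex_in: assumes "n > 0" shows "vertex n k \<in> polygon n"
proof -
  obtain m where m: "k mod int n = int m" "m < n"
    using assms by (metis int_nat_eq less_imp_of_nat_less mod_int_pos_iff nat_less_iff of_nat_0_less_iff pos_mod_bound)
  show ?thesis unfolding polygon_def vertex_mod[OF assms, of k] m
    by (rule hull_inc) (use m in auto)
qed

lemma convex_polygon: "convex (polygon n)"
  unfolding polygon_def by (rule convex_convex_hull)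

lemma compact_polygon: "compact (polygon n)"
proof -
  have "{vertex n (int k) | k. k < n} = (\<lambda>k. vertex n (int k)) ` {..<n}" by auto
  then have "finite {vertex n (int k) | k. k < n}" by simp
  then show ?thesis unfolding polygon_def by (rule finite_imp_compact_convex_hull)
qed

lemma cis_sum_half: "cis a + cis (a + 2*t) = of_real (2 * cos t) * cis (a + t)"
proof -
  have s2: "sin (2*t) = 2 * sin t * cos t" by (rule sin_double)
  have c2: "cos (2*t) = 2 * cos t ^ 2 - 1" by (rule cos_double_cos)
  show ?thesis
    apply (simp add: complex_eq_iff cos_add sin_add s2 c2)
    apply (simp add: power2_eq_square algebra_simps)
    done
qed

lemma edge_mid_eq: assumes "n > 0"
  shows "edge_mid n e = of_real (cos (pi / n)) * cis ((2 * of_int e + 1) * pi / n)"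
proof -
  have "2*pi * of_int (e+1)/n = 2*pi * of_int e/n + 2*(pi/n)" by (simp add: add_divide_distrib algebra_simps)
  then have "edge_mid n e = (cis (2*pi * of_int e/n) + cis (2*pi * of_int e/n + 2*(pi/n))) / 2"
    unfolding edge_mid_def vertex_def by simp
  also have "\<dots> = of_real (cos (pi / n)) * cis (2*pi * of_int e/n + pi/n)"
    by (subst cis_sum_half) simp
  also have "2*pi * of_int e/n + pi/n = (2 * of_int e + 1) * pi / n" using assms by (simp add: field_simps)
  finally show ?thesis .
qed

lemma mid_in: assumes "n > 0" shows "edge_mid n e \<in> polygon n"
proof -
  have "(1/2::real) *\<^sub>R vertex n e + (1 - 1/2) *\<^sub>R vertex n (e+1) \<in> polygon n"
    by (rule convexD[OF convex_polygon]) (use vertex_in[OF assms] in auto)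
  then show ?thesis unfolding edge_mid_def by (simp add: scaleR_conv_of_real field_simps)
qed

lemma inner_cis: "inner (of_real r * cis a) (of_real s * cis b) = r * s * cos (a - b)"
  by (simp add: inner_complex_def cos_diff algebra_simps)

lemma inner_cis1: "inner (of_real r * cis a) (cis b) = r * cos (a - b)"
  using inner_cis[of r a 1 b] by simp

lemma cos_odd_le: fixes n :: nat assumes "n \<ge> 1" shows "cos (real_of_int (2*m+1) * pi / n) \<le> cos (pi / n)"
proof -
  define o' where "o' = (2*m+1) mod (2 * int n)"
  define q where "q = (2*m+1) div (2 * int n)"
  have oq: "2*m+1 = 2 * int n * q + o'" unfolding o'_def q_def by simp
  have o1: "0 \<le> o'" "o' < 2 * int n" unfolding o'_def using assms by auto
  have "o' = 2*(m - int n * q) + 1" using oq by (simp add: algebra_simps)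
  then have oodd: "odd o'" by simp
  then have "o' \<noteq> 0" by auto
  then have o2: "1 \<le> o'" "o' \<le> 2 * int n - 1" using o1 by auto
  have "real_of_int (2*m+1) * pi / n = real_of_int o' * pi / n + 2 * pi * of_int q"
    using assms by (subst oq) (simp add: field_simps)
  then have e: "cos (real_of_int (2*m+1) * pi / n) = cos (real_of_int o' * pi / n)"
    by (simp add: cos_add_int)
  have np: "real n > 0" using assms by simp
  show ?thesis
  proof (cases "o' \<le> int n")
    case True
    have "cos (real_of_int o' * pi / n) \<le> cos (pi / n)"
    proof (rule cos_monotone_0_pi_le)
      show "0 \<le> pi / n" using np by simp
      show "pi / n \<le> real_of_int o' * pi / n" using o2 np by (simp add: divide_right_mono)
      have "real_of_int o' \<le> real n" using True by simp
      then show "real_of_int o' * pi / n \<le> pi" using np by (simp add: field_simps)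
    qed
    then show ?thesis using e by simp
  next
    case False
    have e2: "cos (real_of_int o' * pi / n) = cos (real_of_int (2 * int n - o') * pi / n)"
    proof -
      have "real_of_int (2 * int n - o') * pi / n = - (real_of_int o' * pi / n) + 2*pi * of_int 1"
        using np by (simp add: field_simps)
      then show ?thesis by (simp only: cos_add_int cos_minus)
    qed
    have "cos (real_of_int (2 * int n - o') * pi / n) \<le> cos (pi / n)"
    proof (rule cos_monotone_0_pi_le)
      show "0 \<le> pi / n" using np by simp
      have "1 \<le> real_of_int (2 * int n - o')" using o2 by linarith
      then show "pi / n \<le> real_of_int (2 * int n - o') * pi / n" using np by (simp add: divide_right_mono)
      have "real_of_int (2 * int n - o') \<le> real n" using False by simp
      then show "real_of_int (2 * int n - o') * pi / n \<le> pi" using np by (simp add: field_simps)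
    qed
    then show ?thesis using e e2 by simp
  qed
qed

definition nrm :: "nat \<Rightarrow> int \<Rightarrow> complex" where
  "nrm n f = cis ((2 * of_int f + 1) * pi / n)"

lemma polygon_halfplane: assumes "n \<ge> 1" "z \<in> polygon n"
  shows "inner z (nrm n f) \<le> cos (pi / n)"
proof -
  have "polygon n \<subseteq> {z. inner z (nrm n f) \<le> cos (pi / n)}"
    unfolding polygon_def
  proof (rule hull_minimal)
    show "convex {z. inner z (nrm n f) \<le> cos (pi / n)}" using convex_halfspace_le[of "nrm n f" "cos(pi/n)"] by (simp add: inner_commute)
    show "{vertex n (int k) |k. k < n} \<subseteq> {z. inner z (nrm n f) \<le> cos (pi / n)}"
    proof safe
      fix k assume "k < n"
      have "inner (vertex n (int k)) (nrm n f) = cos (2 * pi * real k / real n - (2 * of_int f + 1) * pi / n)"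
        unfolding vertex_def nrm_def using inner_cis[of 1 _ 1] by simp
      also have "2 * pi * real k / real n - (2 * of_int f + 1) * pi / n = real_of_int (2*(int k - f - 1)+1) * pi / n"
        by (simp only: diff_divide_distrib[symmetric]) (simp add: algebra_simps)
      also have "cos \<dots> \<le> cos (pi / n)" by (rule cos_odd_le[OF assms(1)])
      finally show "inner (vertex n (int k)) (nrm n f) \<le> cos (pi / n)" .
    qed
  qed
  then show ?thesis using assms by auto
qed



lemma nrm_mod: assumes "n > 0" shows "nrm n f = nrm n (f mod int n)"
proof -
  have k: "real_of_int f = real n * of_int (f div int n) + of_int (f mod int n)"
    by (metis of_int_add of_int_mult of_int_of_nat_eq div_mult_mod_eq add.commute mult.commute)
  have "(2 * of_int f + 1) * pi / n = (2 * of_int (f mod int n) + 1) * pi / n + 2*pi * of_int (f div int n)"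
    using assms by (subst k) (simp add: field_simps)
  then show ?thesis unfolding nrm_def by (simp add: cis_add_int)
qed

lemma edge_mid_frontier: assumes "n > 0" shows "edge_mid n e \<in> frontier (polygon n)"
proof -
  have cl: "closed (polygon n)" using compact_polygon compact_imp_closed by blast
  have inP: "edge_mid n e \<in> polygon n" by (rule mid_in[OF assms])
  have im: "inner (edge_mid n e) (nrm n e) = cos (pi / n)"
    unfolding edge_mid_eq[OF assms] nrm_def using inner_cis1 by simp
  have "edge_mid n e \<notin> interior (polygon n)"
  proof
    assume "edge_mid n e \<in> interior (polygon n)"
    then obtain \<epsilon> where e: "\<epsilon> > 0" "ball (edge_mid n e) \<epsilon> \<subseteq> polygon n"
      using mem_interior by blast
    define z where "z = edge_mid n e + (\<epsilon>/2) *\<^sub>R nrm n e"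
    have nn: "norm (nrm n e) = 1" unfolding nrm_def by simp
    have "z \<in> ball (edge_mid n e) \<epsilon>" unfolding z_def using e(1) nn by (simp add: dist_norm)
    then have "z \<in> polygon n" using e by blast
    then have "inner z (nrm n e) \<le> cos (pi / n)" using polygon_halfplane assms by simp
    moreover have "inner z (nrm n e) = cos (pi / n) + \<epsilon>/2"
      unfolding z_def using im nn by (simp add: inner_add_left power2_norm_eq_inner[symmetric])
    ultimately show False using e(1) by simp
  qed
  then show ?thesis unfolding frontier_def using inP closure_subset by blast
qed

lemma sum_vertices: assumes "n \<ge> 3" shows "(\<Sum>k<n. vertex n (int k)) = 0"
proof -
  define w where "w = cis (2*pi/n)"
  have v: "vertex n (int k) = w ^ k" for k
  proof -
    have "w ^ k = cis (real k * (2*pi/n))" unfolding w_def by (rule Complex.DeMoivre)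
    moreover have "real k * (2*pi/n) = 2 * pi * real_of_int (int k) / real n" by simp
    ultimately show ?thesis unfolding vertex_def by (simp add: mult.commute)
  qed
  have np: "real n > 0" using assms by simp
  have "w \<noteq> 1"
  proof
    assume "w = 1"
    then have "sin (2*pi/n) = 0" unfolding w_def by (metis cis.sel(2) one_complex.sel(2))
    moreover have "sin (2*pi/n) > 0"
    proof (rule sin_gt_zero)
      show "0 < 2*pi/n" using np by simp
      have "2 * pi < real n * pi" using assms by simp
      then show "2*pi/n < pi" using np by (simp add: field_simps)
    qed
    ultimately show False by simp
  qed
  moreover have "w ^ n = 1" unfolding w_def Complex.DeMoivre using np by simp
  ultimately show ?thesis unfolding v by (simp add: sum_gp_strict)
qed

lemma zero_in_polygon: assumes "n \<ge> 3" shows "0 \<in> polygon n"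
proof -
  have "(\<Sum>k\<in>{..<n}. (1 / real n) *\<^sub>R vertex n (int k)) \<in> polygon n"
    by (rule convex_sum) (use assms vertex_in convex_polygon in auto)
  moreover have "(\<Sum>k\<in>{..<n}. (1 / real n) *\<^sub>R vertex n (int k)) = 0"
    using sum_vertices[OF assms] by (simp add: scaleR_sum_right[symmetric])
  ultimately show ?thesis by simp
qed



lemma sector:
  assumes n3: "n \<ge> 3" and lt: "\<And>f. inner z (nrm n f) < cos (pi / n)"
  shows "z \<in> polygon n"
proof -
  define t where "t = pi / n"
  have np: "real n > 0" using n3 by simp
  have t0: "t > 0" unfolding t_def using np by simp
  have t3: "t \<le> pi / 3" unfolding t_def using n3 by (intro divide_left_mono) auto
  have s2: "sin (2*t) > 0" by (rule sin_gt_zero) (use t0 t3 in auto)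
  have ct: "cos t > 0" by (rule cos_gt_zero) (use t0 t3 in auto)
  have st: "sin t > 0" by (rule sin_gt_zero) (use t0 t3 in auto)
  define \<rho> where "\<rho> = cmod z"
  define \<tau> where "\<tau> = Arg z"
  have z: "z = of_real \<rho> * cis \<tau>" unfolding \<rho>_def \<tau>_def using rcis_cmod_Arg[of z] by (simp add: rcis_def)
  define k where "k = \<lfloor>\<tau> / (2*t)\<rfloor>"
  define l where "l = \<tau> - 2 * t * of_int k"
  have k1: "of_int k \<le> \<tau> / (2*t)" "\<tau> / (2*t) < of_int k + 1" unfolding k_def by linarith+
  have l0: "0 \<le> l" using k1(1) t0 unfolding l_def by (simp add: field_simps)
  have l2: "l < 2 * t" using k1(2) t0 unfolding l_def by (simp add: field_simps)
  have "inner z (nrm n k) = \<rho> * cos (\<tau> - (2 * of_int k + 1) * pi / n)"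
    unfolding z nrm_def using inner_cis1 by simp
  also have "\<tau> - (2 * of_int k + 1) * pi / n = l - t" unfolding l_def t_def using np by (simp add: field_simps)
  finally have hk: "\<rho> * cos (l - t) < cos t" using lt[of k] unfolding t_def by simp
  define a where "a = \<rho> * sin (2*t - l) / sin (2*t)"
  define b where "b = \<rho> * sin l / sin (2*t)"
  have r0: "\<rho> \<ge> 0" unfolding \<rho>_def by simp
  have sa: "sin (2*t - l) \<ge> 0" by (rule sin_ge_zero) (use l0 l2 t3 in linarith)+
  have sb: "sin l \<ge> 0" by (rule sin_ge_zero) (use l0 l2 t3 in linarith)+
  have a0: "a \<ge> 0" unfolding a_def using r0 s2 sa by simp
  have b0: "b \<ge> 0" unfolding b_def using r0 s2 sb by simp
  have sumsin: "sin (2*t - l) + sin l = 2 * sin t * cos (l - t)"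
  proof -
    have e1: "sin (2*t - l) = sin (2*t) * cos l - cos (2*t) * sin l" by (rule sin_diff)
    have e2: "sin (2*t) = 2 * sin t * cos t" by (rule sin_double)
    have e3: "cos (2*t) = 1 - 2 * sin t ^ 2" by (rule cos_double_sin)
    have e4: "cos (l - t) = cos l * cos t + sin l * sin t" by (rule cos_diff)
    show ?thesis unfolding e1 e2 e3 e4 by (simp add: algebra_simps power2_eq_square)
  qed
  have "a + b = \<rho> * (sin (2*t - l) + sin l) / sin (2*t)" unfolding a_def b_def by (simp add: add_divide_distrib algebra_simps)
  also have "\<dots> = \<rho> * cos (l - t) / cos t"
    unfolding sumsin sin_double using ct s2 st by (simp add: field_simps)
  finally have ab1: "a + b < 1" using hk ct by (simp add: divide_less_eq)
  have zab: "z = of_real a * vertex n k + of_real b * vertex n (k+1)"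
  proof -
    have v1: "vertex n k = cis (2 * t * of_int k)" unfolding vertex_def t_def by (simp add: field_simps)
    have v2: "vertex n (k+1) = cis (2 * t * of_int k) * cis (2*t)"
      unfolding vertex_def t_def cis_mult using np by (simp add: field_simps)
    have zz: "z = cis (2 * t * of_int k) * (of_real \<rho> * cis l)"
    proof -
      have "\<tau> = 2 * t * of_int k + l" unfolding l_def by simp
      then have "cis \<tau> = cis (2 * t * of_int k) * cis l" by (simp add: cis_mult)
      then show ?thesis unfolding z by simp
    qed
    have "of_real \<rho> * cis l = of_real a + of_real b * cis (2*t)"
    proof -
      have e: "sin (2*t - l) = sin (2*t) * cos l - cos (2*t) * sin l" by (rule sin_diff)
      have "\<rho> * cos l = a + b * cos (2*t)" "\<rho> * sin l = b * sin (2*t)"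
        unfolding a_def b_def e using s2 by (simp_all add: field_simps)
      then show ?thesis by (simp add: complex_eq_iff)
    qed
    then show ?thesis unfolding zz v1 v2 by (simp add: algebra_simps)
  qed
  have cp: "convex (polygon n)" by (rule convex_polygon)
  have 0: "0 \<in> polygon n" by (rule zero_in_polygon[OF n3])
  have vk: "vertex n k \<in> polygon n" "vertex n (k+1) \<in> polygon n" using vertex_in np by auto
  show ?thesis
  proof (cases "a + b = 0")
    case True
    then have "a = 0" "b = 0" using a0 b0 by auto
    then show ?thesis using zab 0 by simp
  next
    case False
    then have abp: "a + b > 0" using a0 b0 by simp
    define w where "w = (a/(a+b)) *\<^sub>R vertex n k + (1 - a/(a+b)) *\<^sub>R vertex n (k+1)"
    have "w \<in> polygon n" unfolding w_def
      by (rule convexD[OF cp vk]) (use a0 b0 abp in \<open>auto simp: divide_le_eq\<close>)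
    then have "(a+b) *\<^sub>R w + (1 - (a+b)) *\<^sub>R 0 \<in> polygon n"
      by (intro convexD[OF cp]) (use 0 a0 b0 ab1 in auto)
    moreover have "(a+b) *\<^sub>R w + (1 - (a+b)) *\<^sub>R 0 = z"
    proof -
      have c1: "(a+b) * (a/(a+b)) = a" "(a+b) * (1 - a/(a+b)) = b" using abp by (simp_all add: field_simps)
      have "(a+b) *\<^sub>R w + (1 - (a+b)) *\<^sub>R 0 = a *\<^sub>R vertex n k + b *\<^sub>R vertex n (k+1)"
        unfolding w_def scaleR_add_right scaleR_scaleR c1 by simp
      also have "\<dots> = z" unfolding zab by (simp add: scaleR_conv_of_real)
      finally show ?thesis .
    qed
    ultimately show ?thesis by simp
  qed
qed

lemma frontier_halfplane:
  assumes n3: "n \<ge> 3" and zf: "z \<in> frontier (polygon n)"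
  shows "\<exists>f. inner z (nrm n f) \<ge> cos (pi / n)"
proof (rule ccontr)
  assume "\<not> ?thesis"
  then have lt: "\<And>f. inner z (nrm n f) < cos (pi / n)" by (simp add: not_le)
  define Os where "Os = (\<Inter>f\<in>{0..<int n}. {x. inner (nrm n f) x < cos (pi / n)})"
  have oO: "open Os" unfolding Os_def by (intro open_INT) (auto intro: open_halfspace_lt)
  have np: "n > 0" using n3 by simp
  have "Os \<subseteq> polygon n"
  proof
    fix x assume "x \<in> Os"
    then have h: "inner x (nrm n f) < cos (pi / n)" if "f \<in> {0..<int n}" for f
      using that unfolding Os_def by (auto simp: inner_commute)
    have "inner x (nrm n f) < cos (pi / n)" for f
      using h[of "f mod int n"] np by (simp add: nrm_mod[OF np, of f, symmetric])
    then show "x \<in> polygon n" by (rule sector[OF n3])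
  qed
  then have "Os \<subseteq> interior (polygon n)" using oO by (rule interior_maximal)
  moreover have "z \<in> Os" unfolding Os_def using lt by (auto simp: inner_commute)
  ultimately show False using zf unfolding frontier_def by blast
qed



lemma norm_sub_scale_sq:
  fixes u w :: "'a::real_inner"
  shows "norm (u - c *\<^sub>R w)^2 = norm u ^2 - 2*c*inner u w + c^2 * norm w^2"
  unfolding power2_norm_eq_inner by (simp add: inner_diff_left inner_diff_right inner_commute algebra_simps power2_eq_square)

lemma key_abstract:
  fixes r al mu nu x y L :: real and z A M B W p q :: complex
  assumes r0: "r \<ge> 0"
    and A: "A = of_real r * cis (mu - 2*al)" and M: "M = of_real r * cis mu"
    and B: "B = of_real r * cis (mu + 2*al)" and W: "W = cis nu"
    and zW: "inner z W \<ge> r" and x0: "x \<ge> 0" and y0: "y \<ge> 0" and xy: "x + y \<le> 1"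
    and L0: "L \<ge> 0" and L2: "L^2 = 4 * r^2 * sin al ^2"
    and p: "p = M + x *\<^sub>R (A - M)" and q: "q = M + y *\<^sub>R (B - M)"
  shows "(x+y) * L \<le> norm (p - z) + norm (z - q)"
proof -
  define be where "be = (mu - nu)/2"
  define sa where "sa = sin al"
  define ca where "ca = cos al"
  define sb where "sb = sin be"
  define cb where "cb = cos be"
  have sc: "sa^2 + ca^2 = 1" "sb^2 + cb^2 = 1" unfolding sa_def ca_def sb_def cb_def by simp_all
  have iAW: "inner A W = r * (1 - 2 * (sb * ca - cb * sa)^2)"
  proof -
    have "inner A W = r * cos (mu - 2*al - nu)" unfolding A W by (rule inner_cis1)
    also have "mu - 2*al - nu = 2 * (be - al)" by (simp add: be_def field_simps)
    also have "cos (2 * (be - al)) = 1 - 2 * sin (be - al) ^2" by (rule cos_double_sin)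
    finally show ?thesis unfolding sin_diff sa_def ca_def sb_def cb_def .
  qed
  have iMW: "inner M W = r * (1 - 2 * sb^2)"
  proof -
    have "inner M W = r * cos (mu - nu)" unfolding M W by (rule inner_cis1)
    also have "mu - nu = 2 * be" by (simp add: be_def field_simps)
    also have "cos (2 * be) = 1 - 2 * sin be ^2" by (rule cos_double_sin)
    finally show ?thesis unfolding sb_def .
  qed
  have iBW: "inner B W = r * (1 - 2 * (sb * ca + cb * sa)^2)"
  proof -
    have "inner B W = r * cos (mu + 2*al - nu)" unfolding B W by (rule inner_cis1)
    also have "mu + 2*al - nu = 2 * (be + al)" by (simp add: be_def field_simps)
    also have "cos (2 * (be + al)) = 1 - 2 * sin (be + al) ^2" by (rule cos_double_sin)
    finally show ?thesis unfolding sin_add sa_def ca_def sb_def cb_def .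
  qed
  have c2: "cos (2*al) = 1 - 2 * sa^2" unfolding sa_def by (rule cos_double_sin)
  have c4: "cos (4*al) = 1 - 8 * sa^2 * ca^2"
  proof -
    have "cos (4*al) = cos (2*(2*al))" by simp
    also have "\<dots> = 1 - 2 * sin (2*al)^2" by (rule cos_double_sin)
    finally show ?thesis unfolding sin_double sa_def ca_def by (simp add: power_mult_distrib)
  qed
  have iAA: "inner A A = r^2" "inner M M = r^2" "inner B B = r^2"
    unfolding A M B using inner_cis by (simp_all add: power2_eq_square)
  have iAM: "inner A M = r^2 * (1 - 2 * sa^2)"
    unfolding A M using inner_cis c2 by (simp add: power2_eq_square)
  have iBM: "inner B M = r^2 * (1 - 2 * sa^2)"
    unfolding B M using inner_cis c2 by (simp add: power2_eq_square)
  have iAB: "inner A B = r^2 * (1 - 8 * sa^2 * ca^2)"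
  proof -
    have "inner A B = r * r * cos (mu - 2*al - (mu + 2*al))" unfolding A B by (rule inner_cis)
    also have "mu - 2*al - (mu + 2*al) = - (4*al)" by simp
    finally show ?thesis using c4 by (simp add: power2_eq_square)
  qed
  define dp where "dp = r - inner p W"
  define dq where "dq = r - inner q W"
  have dp: "dp = 2 * r * (x * (sb * ca - cb * sa)^2 + (1-x) * sb^2)"
    unfolding dp_def p inner_add_left inner_diff_left inner_scaleR_left iAW iMW by (simp add: algebra_simps)
  have dq: "dq = 2 * r * ((1-y) * sb^2 + y * (sb * ca + cb * sa)^2)"
    unfolding dq_def q inner_add_left inner_diff_left inner_scaleR_left iBW iMW by (simp add: algebra_simps)
  have dq0: "dq \<ge> 0" unfolding dq using r0 y0 xy x0 by (intro mult_nonneg_nonneg add_nonneg_nonneg) auto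
  have nW: "norm W = 1" unfolding W by simp
  define q' where "q' = q + (2*dq) *\<^sub>R W"
  have n1: "norm (z - q') \<le> norm (z - q)"
  proof -
    have e: "z - q' = (z - q) - (2*dq) *\<^sub>R W" unfolding q'_def by (simp add: algebra_simps)
    have "norm (z - q')^2 = norm (z - q)^2 - 4 * dq * (inner z W - r)"
      unfolding e norm_sub_scale_sq nW by (simp add: inner_diff_left dq_def algebra_simps power2_eq_square)
    also have "\<dots> \<le> norm (z - q)^2" using dq0 zW by simp
    finally show ?thesis by (rule power2_le_imp_le) simp
  qed
  have n2: "norm (p - q')^2 = norm (p - q)^2 + 4 * dp * dq"
  proof -
    have e: "p - q' = (p - q) - (2*dq) *\<^sub>R W" unfolding q'_def by (simp add: algebra_simps)
    show ?thesis
      unfolding e norm_sub_scale_sq nW by (simp add: inner_diff_left dq_def dp_def algebra_simps power2_eq_square)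
  qed
  have n3: "norm (p - q)^2 = x^2 * L^2 + y^2 * L^2 - 2 * x * y * r^2 * (4 * sa^2 - 8 * sa^2 * ca^2)"
  proof -
    have e: "p - q = x *\<^sub>R (A - M) - y *\<^sub>R (B - M)" unfolding p q by (simp add: algebra_simps)
    have "norm (p - q)^2 = x^2 * inner (A - M) (A - M) - 2 * x * y * inner (A - M) (B - M) + y^2 * inner (B - M) (B - M)"
      unfolding e power2_norm_eq_inner inner_diff_left inner_diff_right inner_scaleR_left inner_scaleR_right
      by (simp add: inner_commute algebra_simps power2_eq_square)
    also have "\<dots> = x^2 * (4 * r^2 * sa^2) + y^2 * (4 * r^2 * sa^2) - 2 * x * y * r^2 * (4 * sa^2 - 8 * sa^2 * ca^2)"
      unfolding inner_diff_left inner_diff_right iAA iAM iBM iAB inner_commute[of M A] inner_commute[of M B] by (simp add: algebra_simps)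
    finally show ?thesis using L2 unfolding sa_def by simp
  qed
  have L2': "L^2 = 4 * r^2 * sa^2" using L2 unfolding sa_def .
  have pk: "x * y * sa^4 \<le> (x * (sb * ca - cb * sa)^2 + (1-x) * sb^2) * ((1-y) * sb^2 + y * (sb * ca + cb * sa)^2)"
    by (rule poly_key[OF sc x0 y0 xy])
  have "((x+y) * L)^2 \<le> norm (p - q')^2"
  proof -
    have e: "norm (p - q')^2 - ((x+y) * L)^2 = 16 * r^2 * ((x * (sb * ca - cb * sa)^2 + (1-x) * sb^2) * ((1-y) * sb^2 + y * (sb * ca + cb * sa)^2) - x * y * sa^4)"
      unfolding n2 n3 dp dq power_mult_distrib L2'
      using sc(1) by algebra
    have "16 * r^2 * ((x * (sb * ca - cb * sa)^2 + (1-x) * sb^2) * ((1-y) * sb^2 + y * (sb * ca + cb * sa)^2) - x * y * sa^4) \<ge> 0"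
      using pk by simp
    then show ?thesis using e by simp
  qed
  then have "(x+y) * L \<le> norm (p - q')" by (rule power2_le_imp_le) simp
  also have "\<dots> \<le> norm (p - z) + norm (z - q')" using norm_triangle_ineq[of "p - z" "z - q'"] by simp
  also have "\<dots> \<le> norm (p - z) + norm (z - q)" using n1 by simp
  finally show ?thesis .
qed



definition ell :: "nat \<Rightarrow> real" where "ell n = 2 * cos (pi / n) * sin (pi / n)"

lemma trig_basic: assumes "n \<ge> 3"
  shows "cos (pi / n) > 0" "sin (pi / n) > 0" "ell n > 0"
proof -
  have np: "real n > 0" using assms by simp
  have t0: "pi / n > 0" using np by simp
  have t3: "pi / n \<le> pi / 3" using assms by (intro divide_left_mono) auto
  show c: "cos (pi / n) > 0" by (rule cos_gt_zero) (use t0 t3 pi_gt_zero in linarith)+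
  show s: "sin (pi / n) > 0" by (rule sin_gt_zero) (use t0 t3 pi_gt_zero in linarith)+
  show "ell n > 0" unfolding ell_def using c s by simp
qed

lemma sigma_facts: assumes "\<sigma> = 1 \<or> \<sigma> = -1"
  shows "sin (of_int \<sigma> * t) ^ 2 = sin t ^ 2"
  using assms by auto

lemma mid_angles: assumes "n > 0"
  shows "edge_mid n e = of_real (cos (pi/n)) * cis ((2 * of_int (e + \<sigma>) + 1) * pi / n - 2 * (of_int \<sigma> * pi / n))"
    "edge_mid n (e + \<sigma>) = of_real (cos (pi/n)) * cis ((2 * of_int (e + \<sigma>) + 1) * pi / n)"
    "edge_mid n (e + 2 * \<sigma>) = of_real (cos (pi/n)) * cis ((2 * of_int (e + \<sigma>) + 1) * pi / n + 2 * (of_int \<sigma> * pi / n))"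
proof -
  have np: "real n > 0" using assms by simp
  show "edge_mid n e = of_real (cos (pi/n)) * cis ((2 * of_int (e + \<sigma>) + 1) * pi / n - 2 * (of_int \<sigma> * pi / n))"
  proof -
    have "(2 * of_int (e + \<sigma>) + 1) * pi / n - 2 * (of_int \<sigma> * pi / n) = (2 * of_int e + 1) * pi / n"
      using np by (simp add: field_simps)
    then show ?thesis unfolding edge_mid_eq[OF assms] by simp
  qed
  show "edge_mid n (e + \<sigma>) = of_real (cos (pi/n)) * cis ((2 * of_int (e + \<sigma>) + 1) * pi / n)"
    unfolding edge_mid_eq[OF assms] by simp
  show "edge_mid n (e + 2 * \<sigma>) = of_real (cos (pi/n)) * cis ((2 * of_int (e + \<sigma>) + 1) * pi / n + 2 * (of_int \<sigma> * pi / n))"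
  proof -
    have "(2 * of_int (e + \<sigma>) + 1) * pi / n + 2 * (of_int \<sigma> * pi / n) = (2 * of_int (e + 2 * \<sigma>) + 1) * pi / n"
      using np by (simp add: field_simps)
    then show ?thesis unfolding edge_mid_eq[OF assms] by simp
  qed
qed

lemma mid_dist: assumes n3: "n \<ge> 3" and s: "\<sigma> = 1 \<or> \<sigma> = -1"
  shows "norm (edge_mid n e - edge_mid n (e + \<sigma>)) = ell n"
    "norm (edge_mid n (e + 2 * \<sigma>) - edge_mid n (e + \<sigma>)) = ell n"
proof -
  have np: "n > 0" using n3 by simp
  define r where "r = cos (pi / n)"
  define al where "al = of_int \<sigma> * pi / n"
  define mu where "mu = (2 * of_int (e + \<sigma>) + 1) * pi / n"
  have sq: "norm (of_real r * cis (mu + d) - of_real r * cis mu) ^ 2 = 4 * r^2 * sin (d/2) ^ 2" for d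
  proof -
    have "norm (of_real r * cis (mu + d) - of_real r * cis mu) ^ 2 = r * r * cos (mu + d - (mu + d)) - 2 * (r * r * cos (mu + d - mu)) + r * r * cos (mu - mu)"
      unfolding power2_norm_eq_inner inner_diff_left inner_diff_right inner_cis by (simp add: inner_commute)
    also have "\<dots> = 2 * r^2 * (1 - cos d)" by (simp add: power2_eq_square algebra_simps)
    also have "cos d = 1 - 2 * sin (d/2) ^ 2" using cos_double_sin[of "d/2"] by simp
    finally show ?thesis by simp
  qed
  have ss: "sin (al) ^ 2 = sin (pi / n) ^ 2" unfolding al_def using s by auto
  have r0: "r > 0" "sin (pi / n) > 0" unfolding r_def using trig_basic[OF n3] by auto
  have L: "sqrt (4 * r^2 * sin (pi/n) ^ 2) = ell n"
    unfolding ell_def r_def[symmetric] using r0 by (simp add: real_sqrt_mult)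
  have "norm (edge_mid n e - edge_mid n (e + \<sigma>)) = sqrt (norm (of_real r * cis (mu + (- 2*al)) - of_real r * cis mu) ^ 2)"
    unfolding mid_angles[OF np, of e \<sigma>] r_def[symmetric] mu_def[symmetric] al_def[symmetric] by simp
  also have "\<dots> = ell n" unfolding sq using ss L by simp
  finally show "norm (edge_mid n e - edge_mid n (e + \<sigma>)) = ell n" .
  have "norm (edge_mid n (e + 2 * \<sigma>) - edge_mid n (e + \<sigma>)) = sqrt (norm (of_real r * cis (mu + 2*al) - of_real r * cis mu) ^ 2)"
    unfolding mid_angles[OF np, of e \<sigma>] r_def[symmetric] mu_def[symmetric] al_def[symmetric] by simp
  also have "\<dots> = ell n" unfolding sq using ss L by simp
  finally show "norm (edge_mid n (e + 2 * \<sigma>) - edge_mid n (e + \<sigma>)) = ell n" .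
qed

lemma mid_pair:
  assumes n3: "n \<ge> 3" and s: "\<sigma> = 1 \<or> \<sigma> = -1"
    and u: "0 \<le> u'" "u' \<le> u" "u \<le> 1"
    and p: "p = edge_mid n e + of_real u * (edge_mid n (e + \<sigma>) - edge_mid n e)"
    and q: "q = edge_mid n (e + \<sigma>) + of_real u' * (edge_mid n (e + 2*\<sigma>) - edge_mid n (e + \<sigma>))"
  shows "Inf {dist p z + dist z q | z. z \<in> frontier (polygon n)} = (1 - u + u') * ell n"
proof (rule cInf_eq_minimum)
  have np: "n > 0" using n3 by simp
  define A where "A = edge_mid n e"
  define M where "M = edge_mid n (e + \<sigma>)"
  define B where "B = edge_mid n (e + 2*\<sigma>)"
  have p': "p = M + (1 - u) *\<^sub>R (A - M)" unfolding p A_def M_def by (simp add: scaleR_conv_of_real algebra_simps)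
  have q': "q = M + u' *\<^sub>R (B - M)" unfolding q B_def M_def by (simp add: scaleR_conv_of_real algebra_simps)
  have dAM: "norm (A - M) = ell n" "norm (B - M) = ell n" unfolding A_def M_def B_def using mid_dist[OF n3 s] by auto
  have d1: "dist p M = (1-u) * ell n" unfolding p' dist_norm using dAM u by simp
  have d2: "dist M q = u' * ell n" unfolding q' dist_norm using dAM u by simp
  have "dist p M + dist M q = (1 - u + u') * ell n" unfolding d1 d2 by (simp add: algebra_simps)
  moreover have "M \<in> frontier (polygon n)" unfolding M_def by (rule edge_mid_frontier[OF np])
  ultimately show "(1 - u + u') * ell n \<in> {dist p z + dist z q | z. z \<in> frontier (polygon n)}" by force
  fix v assume "v \<in> {dist p z + dist z q | z. z \<in> frontier (polygon n)}"
  then obtain z where z: "z \<in> frontier (polygon n)" "v = dist p z + dist z q" by blast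
  obtain f where f: "inner z (nrm n f) \<ge> cos (pi / n)" using frontier_halfplane[OF n3 z(1)] by blast
  have r0: "cos (pi / n) > 0" "sin (pi / n) > 0" using trig_basic[OF n3] by auto
  have "((1 - u) + u') * ell n \<le> norm (p - z) + norm (z - q)"
  proof (rule key_abstract)
    show "0 \<le> cos (pi / n)" using r0 by simp
    show "A = of_real (cos (pi/n)) * cis ((2 * of_int (e + \<sigma>) + 1) * pi / n - 2 * (of_int \<sigma> * pi / n))"
      unfolding A_def by (rule mid_angles[OF np])
    show "M = of_real (cos (pi/n)) * cis ((2 * of_int (e + \<sigma>) + 1) * pi / n)"
      unfolding M_def by (rule mid_angles[OF np])
    show "B = of_real (cos (pi/n)) * cis ((2 * of_int (e + \<sigma>) + 1) * pi / n + 2 * (of_int \<sigma> * pi / n))"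
      unfolding B_def by (rule mid_angles[OF np])
    show "nrm n f = cis ((2 * of_int f + 1) * pi / n)" unfolding nrm_def ..
    show "cos (pi / n) \<le> inner z (nrm n f)" by (rule f)
    show "0 \<le> 1 - u" "0 \<le> u'" "1 - u + u' \<le> 1" using u by auto
    show "0 \<le> ell n" using trig_basic[OF n3] by simp
    have "sin (of_int \<sigma> * pi / n) ^ 2 = sin (pi / n) ^ 2" using s by auto
    then show "(ell n)^2 = 4 * (cos (pi / n))^2 * sin (of_int \<sigma> * pi / n) ^ 2"
      unfolding ell_def by (simp add: power_mult_distrib)
    show "p = M + (1 - u) *\<^sub>R (A - M)" by (rule p')
    show "q = M + u' *\<^sub>R (B - M)" by (rule q')
  qed
  then show "(1 - u + u') * ell n \<le> v" unfolding z(2) dist_norm by simp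
qed



lemma base_simp:
  "over_under_base n j \<sigma> b s = (b \<noteq> odd \<lfloor>s\<rfloor>,
     edge_mid n (j + \<sigma> * \<lfloor>s\<rfloor>) + of_real (s - of_int \<lfloor>s\<rfloor>) * (edge_mid n (j + \<sigma> * \<lfloor>s\<rfloor> + \<sigma>) - edge_mid n (j + \<sigma> * \<lfloor>s\<rfloor>)))"
  unfolding over_under_base_def Let_def by (simp add: algebra_simps)

lemma dX_same: "dX n x x = 0"
  unfolding dX_def by simp

lemma dX_tri:
  assumes ne: "frontier (polygon n) \<noteq> {}"
  shows "dX n x z \<le> dX n x y + dX n y z"
proof -
  define I where "I = (\<lambda>p q. Inf {dist p w + dist w q | w. w \<in> frontier (polygon n)})"
  have bdd: "bdd_below {dist p w + dist w q | w. w \<in> frontier (polygon n)}" for p q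
    by (rule bdd_belowI[of _ 0]) auto
  have ne2: "{dist p w + dist w q | w. w \<in> frontier (polygon n)} \<noteq> {}" for p q using ne by auto
  have Ige: "dist p q \<le> I p q" for p q unfolding I_def
    by (rule cInf_greatest[OF ne2]) (auto intro: dist_triangle)
  have Ile: "I p q \<le> dist p w + dist w q" if "w \<in> frontier (polygon n)" for p q w
    unfolding I_def by (rule cInf_lower) (use that bdd in auto)
  have Il: "I p q \<le> dist p p' + I p' q" for p p' q
  proof -
    have "I p q - dist p p' \<le> I p' q" unfolding I_def
    proof (rule cInf_greatest[OF ne2])
      fix v assume "v \<in> {dist p' w + dist w q | w. w \<in> frontier (polygon n)}"
      then obtain w where w: "w \<in> frontier (polygon n)" "v = dist p' w + dist w q" by blast
      have "I p q \<le> dist p w + dist w q" by (rule Ile[OF w(1)])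
      also have "\<dots> \<le> dist p p' + dist p' w + dist w q" using dist_triangle[of p w p'] by simp
      finally show "Inf {dist p w + dist w q | w. w \<in> frontier (polygon n)} - dist p p' \<le> v"
        unfolding w(2) I_def by simp
    qed
    then show ?thesis by simp
  qed
  have Ir: "I p q \<le> I p q' + dist q' q" for p q q'
  proof -
    have "I p q - dist q' q \<le> I p q'" unfolding I_def
    proof (rule cInf_greatest[OF ne2])
      fix v assume "v \<in> {dist p w + dist w q' | w. w \<in> frontier (polygon n)}"
      then obtain w where w: "w \<in> frontier (polygon n)" "v = dist p w + dist w q'" by blast
      have "I p q \<le> dist p w + dist w q" by (rule Ile[OF w(1)])
      also have "\<dots> \<le> dist p w + dist w q' + dist q' q" using dist_triangle[of w q q'] by simp
      finally show "Inf {dist p w + dist w q | w. w \<in> frontier (polygon n)} - dist q' q \<le> v"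
        unfolding w(2) I_def by simp
    qed
    then show ?thesis by simp
  qed
  have dXI: "dX n x y = (if fst x = fst y then dist (snd x) (snd y) else I (snd x) (snd y))" for x y
    unfolding dX_def I_def by simp
  show ?thesis
  proof (cases "fst x = fst y")
    case xy: True
    show ?thesis
    proof (cases "fst y = fst z")
      case True
      then show ?thesis using xy unfolding dXI by (simp add: dist_triangle)
    next
      case False
      then show ?thesis using xy unfolding dXI by (simp add: Il)
    qed
  next
    case xy: False
    show ?thesis
    proof (cases "fst y = fst z")
      case True
      then show ?thesis using xy unfolding dXI by (simp add: Ir)
    next
      case False
      then have "fst x = fst z" using xy by auto
      then show ?thesis using xy False unfolding dXI
        using Ige[of "snd x" "snd y"] Ige[of "snd y" "snd z"] dist_triangle[of "snd x" "snd z" "snd y"] by simp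
    qed
  qed
qed

lemma base_dist:
  assumes n3: "n \<ge> 3" and s: "\<sigma> = 1 \<or> \<sigma> = -1" and ss: "t \<le> t'" "t' \<le> t + 1"
  shows "dX n (over_under_base n j \<sigma> b t) (over_under_base n j \<sigma> b t') = (t' - t) * ell n"
proof -
  define k where "k = \<lfloor>t\<rfloor>"
  define k' where "k' = \<lfloor>t'\<rfloor>"
  have kk: "k \<le> k'" unfolding k_def k'_def using ss by (intro floor_mono)
  have kk2: "k' \<le> k + 1" unfolding k_def k'_def using ss by linarith
  define e where "e = j + \<sigma> * k"
  show ?thesis
  proof (cases "k' = k")
    case True
    have "dX n (over_under_base n j \<sigma> b t) (over_under_base n j \<sigma> b t')
       = dist (edge_mid n e + of_real (t - of_int k) * (edge_mid n (e + \<sigma>) - edge_mid n e))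
              (edge_mid n e + of_real (t' - of_int k) * (edge_mid n (e + \<sigma>) - edge_mid n e))"
      unfolding base_simp dX_def k_def[symmetric] k'_def[symmetric] True e_def by simp
    also have "\<dots> = norm (of_real (t' - t) * (edge_mid n (e + \<sigma>) - edge_mid n e))"
      unfolding dist_norm by (simp add: norm_minus_commute algebra_simps)
    also have "\<dots> = (t' - t) * ell n"
    proof -
      have h: "norm (complex_of_real (t' - t)) = t' - t" unfolding norm_of_real using ss by simp
      show ?thesis by (simp only: norm_mult h norm_minus_commute[of "edge_mid n (e + \<sigma>)"] mid_dist(1)[OF n3 s])
    qed
    finally show ?thesis .
  next
    case False
    then have k1: "k' = k + 1" using kk kk2 by simp
    have fd: "(b \<noteq> odd k) \<noteq> (b \<noteq> odd k')" unfolding k1 by simp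
    have "dX n (over_under_base n j \<sigma> b t) (over_under_base n j \<sigma> b t')
       = Inf {dist (edge_mid n e + of_real (t - of_int k) * (edge_mid n (e + \<sigma>) - edge_mid n e)) z
          + dist z (edge_mid n (e + \<sigma>) + of_real (t' - of_int k') * (edge_mid n (e + 2 * \<sigma>) - edge_mid n (e + \<sigma>))) | z. z \<in> frontier (polygon n)}"
    proof -
      have e1: "j + \<sigma> * k' = e + \<sigma>" "j + \<sigma> * k' + \<sigma> = e + 2 * \<sigma>" unfolding k1 e_def by (simp_all add: algebra_simps)
      have f: "fst (over_under_base n j \<sigma> b t) \<noteq> fst (over_under_base n j \<sigma> b t')"
        unfolding base_simp k_def[symmetric] k'_def[symmetric] using fd by simp
      have sp: "snd (over_under_base n j \<sigma> b t) = edge_mid n e + of_real (t - of_int k) * (edge_mid n (e + \<sigma>) - edge_mid n e)"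
        unfolding base_simp k_def[symmetric] e_def by simp
      have sq: "snd (over_under_base n j \<sigma> b t') = edge_mid n (e + \<sigma>) + of_real (t' - of_int k') * (edge_mid n (e + 2 * \<sigma>) - edge_mid n (e + \<sigma>))"
        unfolding base_simp k'_def[symmetric] using e1 by (simp add: algebra_simps)
      show ?thesis unfolding dX_def using f by (simp only: if_False sp sq)
    qed
    also have "\<dots> = (1 - (t - of_int k) + (t' - of_int k')) * ell n"
    proof (rule mid_pair[OF n3 s])
      have fl: "of_int k \<le> t" "t < of_int k + 1" "of_int k' \<le> t'" "t' < of_int k' + 1"
        unfolding k_def k'_def by linarith+
      have kr: "real_of_int k' = of_int k + 1" using k1 by simp
      show "0 \<le> t' - of_int k'" "t' - of_int k' \<le> t - of_int k" "t - of_int k \<le> 1"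
        using fl kr ss by linarith+
    qed simp_all
    also have "(1 - (t - of_int k) + (t' - of_int k')) = t' - t" unfolding k1 by simp
    finally show ?thesis .
  qed
qed



lemma base_le:
  assumes n3: "n \<ge> 3" and s: "\<sigma> = 1 \<or> \<sigma> = -1" and tt: "t \<le> t'"
  shows "dX n (over_under_base n j \<sigma> b t) (over_under_base n j \<sigma> b t') \<le> (t' - t) * ell n"
proof -
  have ne: "frontier (polygon n) \<noteq> {}" using edge_mid_frontier[of n 0] n3 by auto
  have "\<forall>t t'. t \<le> t' \<and> t' \<le> t + real m \<longrightarrow>
      dX n (over_under_base n j \<sigma> b t) (over_under_base n j \<sigma> b t') \<le> (t' - t) * ell n" for m
  proof (induction m)
    case 0
    then show ?case by (auto simp: dX_same)
  next
    case (Suc m)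
    show ?case
    proof (intro allI impI)
      fix t t' :: real assume h: "t \<le> t' \<and> t' \<le> t + real (Suc m)"
      show "dX n (over_under_base n j \<sigma> b t) (over_under_base n j \<sigma> b t') \<le> (t' - t) * ell n"
      proof (cases "t' \<le> t + 1")
        case True
        then show ?thesis using base_dist[OF n3 s, of t t' j b] h by simp
      next
        case False
        have "dX n (over_under_base n j \<sigma> b t) (over_under_base n j \<sigma> b t')
          \<le> dX n (over_under_base n j \<sigma> b t) (over_under_base n j \<sigma> b (t+1)) + dX n (over_under_base n j \<sigma> b (t+1)) (over_under_base n j \<sigma> b t')"
          by (rule dX_tri[OF ne])
        also have "dX n (over_under_base n j \<sigma> b t) (over_under_base n j \<sigma> b (t+1)) = ell n"
          using base_dist[OF n3 s, of t "t+1" j b] by simp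
        also have "dX n (over_under_base n j \<sigma> b (t+1)) (over_under_base n j \<sigma> b t') \<le> (t' - (t+1)) * ell n"
          using Suc.IH h False by auto
        finally show ?thesis by (simp add: algebra_simps)
      qed
    qed
  qed
  moreover have "t' \<le> t + real (nat \<lceil>t' - t\<rceil>)" by linarith
  ultimately show ?thesis using tt by blast
qed

lemma curve_length_lin:
  fixes g :: "real \<Rightarrow> bool \<times> complex"
  assumes h: "h > 0"
    and le: "\<And>a b. a \<le> b \<Longrightarrow> dX n (g a) (g b) \<le> K * (b - a)"
    and eq: "\<And>a b. a \<le> b \<Longrightarrow> b \<le> a + h \<Longrightarrow> dX n (g a) (g b) = K * (b - a)"
    and ab: "a \<le> b"
  shows "curve_length n g a b = K * (b - a)"
  unfolding curve_length_def
proof (rule cSup_eq_maximum)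
  define m where "m = nat \<lceil>(b - a) / h\<rceil> + 1"
  define dd where "dd = (b - a) / m"
  define t where "t = (\<lambda>i::nat. a + real i * dd)"
  have m0: "real m > 0" unfolding m_def by simp
  have mh: "(b - a) / h \<le> real m" unfolding m_def by linarith
  have st: "(b - a) / m \<le> h" using mh m0 h by (simp add: field_simps)
  have st0: "(b - a) / m \<ge> 0" using ab m0 by simp
  have t0: "t 0 = a" unfolding t_def by simp
  have tm: "t m = b" unfolding t_def dd_def using m0 by simp
  have d: "t (Suc i) - t i = (b - a) / m" for i unfolding t_def dd_def[symmetric] by (simp add: algebra_simps)
  have mono: "\<forall>i<m. t i \<le> t (Suc i)" using d st0 by (simp add: algebra_simps)
  have "(\<Sum>i<m. dX n (g (t i)) (g (t (Suc i)))) = (\<Sum>i<m. K * ((b - a) / m))"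
  proof (rule sum.cong)
    fix i assume "i \<in> {..<m}"
    have "dX n (g (t i)) (g (t (Suc i))) = K * (t (Suc i) - t i)"
      by (rule eq) (use d[of i] st st0 in linarith)+
    then show "dX n (g (t i)) (g (t (Suc i))) = K * ((b - a) / m)" using d by simp
  qed simp
  also have "\<dots> = K * (b - a)" using m0 by simp
  finally have S: "(\<Sum>i<m. dX n (g (t i)) (g (t (Suc i)))) = K * (b - a)" .
  show "K * (b - a) \<in> {\<Sum>i<m. dX n (g (t i)) (g (t (Suc i))) |t m. t 0 = a \<and> t m = b \<and> (\<forall>i<m. t i \<le> t (Suc i))}"
    unfolding mem_Collect_eq by (rule exI[where x=t], rule exI[where x=m]) (use S t0 tm mono in auto)
next
  fix x assume "x \<in> {\<Sum>i<m. dX n (g (t i)) (g (t (Suc i))) |t m. t 0 = a \<and> t m = b \<and> (\<forall>i<m. t i \<le> t (Suc i))}"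
  then obtain t m where x: "x = (\<Sum>i<m. dX n (g (t i)) (g (t (Suc i))))" and t: "t 0 = a" "t m = b" "\<forall>i<m. t i \<le> t (Suc i)"
    by blast
  have "x \<le> (\<Sum>i<m. K * (t (Suc i) - t i))" unfolding x
    by (rule sum_mono) (use t le in auto)
  also have "\<dots> = K * (t m - t 0)" by (simp add: sum_distrib_left[symmetric] sum_lessThan_telescope)
  finally show "x \<le> K * (b - a)" using t by simp
qed

lemma edge_mid_period: assumes "n > 0" shows "edge_mid n (e + int n * m) = edge_mid n e"
proof -
  have v: "vertex n (x + int n * m) = vertex n x" for x
    using vertex_mod[OF assms, of "x + int n * m"] vertex_mod[OF assms, of x] by simp
  show ?thesis unfolding edge_mid_def using v[of e] v[of "e+1"] by (simp add: algebra_simps)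
qed

lemma base_period:
  assumes np: "n > 0"
  shows "over_under_base n j \<sigma> b (s + real (num_segments n)) = over_under_base n j \<sigma> b s"
proof -
  define c where "c = (if even n then 1 else 2 :: int)"
  have N: "int (num_segments n) = int n * c" unfolding num_segments_def c_def by simp
  have Ne: "even (num_segments n)" unfolding num_segments_def by simp
  have fl: "\<lfloor>s + real (num_segments n)\<rfloor> = \<lfloor>s\<rfloor> + int (num_segments n)" by simp
  have od: "odd (\<lfloor>s\<rfloor> + int (num_segments n)) = odd \<lfloor>s\<rfloor>" using Ne by simp
  have e1: "edge_mid n (j + \<sigma> * (\<lfloor>s\<rfloor> + int (num_segments n))) = edge_mid n (j + \<sigma> * \<lfloor>s\<rfloor>)"
    using edge_mid_period[OF np, of "j + \<sigma> * \<lfloor>s\<rfloor>" "\<sigma> * c"] unfolding N by (simp add: algebra_simps)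
  have e2: "edge_mid n (j + \<sigma> * (\<lfloor>s\<rfloor> + int (num_segments n)) + \<sigma>) = edge_mid n (j + \<sigma> * \<lfloor>s\<rfloor> + \<sigma>)"
    using edge_mid_period[OF np, of "j + \<sigma> * \<lfloor>s\<rfloor> + \<sigma>" "\<sigma> * c"] unfolding N by (simp add: algebra_simps)
  show ?thesis unfolding base_simp fl od e1 e2 by simp
qed

lemma base_in:
  assumes np: "n > 0"
  shows "snd (over_under_base n j \<sigma> b s) \<in> polygon n"
proof -
  define u where "u = s - of_int \<lfloor>s\<rfloor>"
  have u: "0 \<le> u" "u \<le> 1" unfolding u_def by linarith+
  have "(1 - u) *\<^sub>R edge_mid n (j + \<sigma> * \<lfloor>s\<rfloor>) + u *\<^sub>R edge_mid n (j + \<sigma> * \<lfloor>s\<rfloor> + \<sigma>) \<in> polygon n"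
    by (rule convexD[OF convex_polygon mid_in[OF np] mid_in[OF np]]) (use u in auto)
  then show ?thesis unfolding base_simp u_def[symmetric] by (simp add: scaleR_conv_of_real algebra_simps)
qed



lemma main_general:
  assumes n3: "n \<ge> 3" and s: "\<sigma> = 1 \<or> \<sigma> = -1" and kN: "real k = real (num_segments n)"
  shows "one_over_k_geodesic n (over_under n j \<sigma> b c) k"
proof -
  define N where "N = real (num_segments n)"
  define g where "g = over_under n j \<sigma> b c"
  define K where "K = N * ell n"
  have np: "n > 0" using n3 by simp
  have N0: "N > 0" unfolding N_def num_segments_def using np by simp
  have g: "g t = over_under_base n j \<sigma> b (N * t + c)" for t unfolding g_def over_under_def N_def by simp
  have K0: "K > 0" unfolding K_def using N0 trig_basic[OF n3] by simp
  have le: "dX n (g a) (g b') \<le> K * (b' - a)" if "a \<le> b'" for a b'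
  proof -
    have "dX n (g a) (g b') \<le> ((N * b' + c) - (N * a + c)) * ell n"
      unfolding g by (rule base_le[OF n3 s]) (use that N0 in simp)
    then show ?thesis unfolding K_def by (simp add: algebra_simps)
  qed
  have eq: "dX n (g a) (g b') = K * (b' - a)" if "a \<le> b'" "b' \<le> a + 1 / N" for a b'
  proof -
    have h2: "N * b' \<le> N * a + 1" using that(2) N0 by (simp add: field_simps)
    have "dX n (g a) (g b') = ((N * b' + c) - (N * a + c)) * ell n"
      unfolding g by (rule base_dist[OF n3 s]) (use that N0 h2 in simp_all)
    then show ?thesis unfolding K_def by (simp add: algebra_simps)
  qed
  have h0: "1 / N > 0" using N0 by simp
  have CL: "curve_length n g a b' = K * (b' - a)" if "a \<le> b'" for a b'
    by (rule curve_length_lin[OF h0 le eq that]) auto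
  have TL: "total_length n g = K" unfolding total_length_def using CL[of 0 1] by simp
  have cc: "closed_curve n g"
    unfolding closed_curve_def
  proof (intro conjI allI)
    fix t
    show "g t \<in> XN n" unfolding XN_def using base_in[OF np, of j \<sigma> b "N * t + c"] unfolding g
      by (cases "over_under_base n j \<sigma> b (N * t + c)") auto
    have "g (t + 1) = over_under_base n j \<sigma> b ((N * t + c) + real (num_segments n))"
      unfolding g N_def by (simp add: algebra_simps)
    then show "g (t + 1) = g t" unfolding base_period[OF np] g .
  qed
  have lm: "locally_minimizing_at n g t" for t
    unfolding locally_minimizing_at_def
  proof (intro exI[where x="1 / (2 * N)"] conjI allI impI)
    show "1 / (2 * N) > 0" using N0 by simp
    fix a b' assume h: "t - 1 / (2 * N) \<le> a" "a \<le> b'" "b' \<le> t + 1 / (2 * N)"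
    have "b' \<le> a + 1 / N" using h N0 by (simp add: field_simps)
    then show "curve_length n g a b' = dX n (g a) (g b')" using CL[OF h(2)] eq[OF h(2)] by simp
  qed
  show ?thesis
    unfolding one_over_k_geodesic_def g_def[symmetric]
  proof (intro conjI allI)
    show "closed_geodesic n g" unfolding closed_geodesic_def by (intro conjI cc allI lm)
    show "constant_speed n g" unfolding constant_speed_def TL using CL by (simp add: algebra_simps)
    show "0 < total_length n g" using TL K0 by simp
    fix a
    have k1: "1 / real k = 1 / N" using kN unfolding N_def by simp
    have "a \<le> a + 1 / N" using N0 by simp
    then show "curve_length n g a (a + 1 / real k) = dX n (g a) (g (a + 1 / real k))"
      unfolding k1 using CL eq by simp
  qed
qed

theorem mainTheorem1:
  fixes n :: nat and j \<sigma> :: int and b :: bool and c :: real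
  assumes "n \<ge> 3" and "\<sigma> = 1 \<or> \<sigma> = -1"
  shows "(even n \<longrightarrow> one_over_k_geodesic n (over_under n j \<sigma> b c) n) \<and>
         (odd n \<longrightarrow> one_over_k_geodesic n (over_under n j \<sigma> b c) (2 * n))"
proof (intro conjI impI)
  assume "even n"
  then show "one_over_k_geodesic n (over_under n j \<sigma> b c) n"
    by (intro main_general[OF assms]) (simp add: num_segments_def)
next
  assume "odd n"
  then show "one_over_k_geodesic n (over_under n j \<sigma> b c) (2 * n)"
    by (intro main_general[OF assms]) (simp add: num_segments_def)
qed

end
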